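(* Let $\mathcal{D}$ be the set of $d\times d$ density matrices. For $u\in\mathbb{R}$, $\mu\in\{1,\ldots,m\}$ let $M_\mu^u\in\mathbb{C}^{d\times d}$ with $\sum_\mu(M_\mu^u)^\dagger M_\mu^u=\mathrm{I}$, such that (A1) $M_\mu^0=\sum_nc_{\mu,n}|n\rangle\langle n|$ in a fixed orthonormal basis $\{|n\rangle\}$; (A2) for all $n_1\neq n_2$ there is $\mu$ with $|c_{\mu,n_1}|^2\neq|c_{\mu,n_2}|^2$; (A3) each $u\mapsto M_\mu^u$ is $C^2$. For $(\rho,\beta)\in\mathcal{D}\times\mathbb{R}$ let $p_\mu=\mathrm{tr}(M_\mu^\beta\rho(M_\mu^\beta)^\dagger)$, $a_{\mu,n}=\langle n|M_\mu^\beta\rho(M_\mu^\beta)^\dagger|n\rangle$, and $$Q_1(\rho,\beta)=\sum_{n}\sum_{\mu,\nu:\,p_\mu p_\nu>0}\frac{p_\mu p_\nu}{4}\Big(\frac{a_{\mu,n}}{p_\mu}-\frac{a_{\nu,n}}{p_\nu}\Big)^2.$$ Let $\tilde u>0$. Then there exists $C>0$ such that for all $(\rho,\beta)\in\mathcal{D}\times[-\tilde u,\tilde u]$ with $Q_1(\rho,\beta)=0$, there exists $n\in\{1,\ldots,d\}$ with $\langle n|\rho|n\rangle\ge1-C|\beta|$. *)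

theory Defs
  imports "HOL-Analysis.Analysis"
begin

text \<open>d x d complex matrices are modelled as complex^'d^'d with 'd a finite index type
  (d = CARD('d)); the Kraus index set {1..m} is a finite type 'm.\<close>

definition cadj :: "complex^'d^'d \<Rightarrow> complex^'d^'d" where
  "cadj A = (\<chi> i j. cnj (A $ j $ i))"

definition ctrace :: "complex^'d^'d \<Rightarrow> complex" where
  "ctrace A = (\<Sum>i\<in>UNIV. A $ i $ i)"

definition diag_mat :: "('d \<Rightarrow> complex) \<Rightarrow> complex^'d^'d" where
  "diag_mat c = (\<chi> i j. if i = j then c i else 0)"

definition unitary_mat :: "complex^'d^'d \<Rightarrow> bool" where
  "unitary_mat U \<longleftrightarrow> cadj U ** U = mat 1 \<and> U ** cadj U = mat 1"

definition psd_mat :: "complex^'d^'d \<Rightarrow> bool" where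
  "psd_mat A \<longleftrightarrow> (\<forall>x::complex^'d.
      let q = (\<Sum>i\<in>UNIV. \<Sum>j\<in>UNIV. cnj (x $ i) * A $ i $ j * x $ j)
      in q \<in> \<real> \<and> Re q \<ge> 0)"

definition density_mat :: "complex^'d^'d \<Rightarrow> bool" where
  "density_mat \<rho> \<longleftrightarrow> psd_mat \<rho> \<and> ctrace \<rho> = 1"

text \<open>Diagonal element <n|A|n> in the orthonormal basis given by the columns of the unitary U.\<close>
definition bdiag :: "complex^'d^'d \<Rightarrow> complex^'d^'d \<Rightarrow> 'd \<Rightarrow> complex" where
  "bdiag U A n = (cadj U ** A ** U) $ n $ n"

definition C2_fun :: "(real \<Rightarrow> 'a::real_normed_vector) \<Rightarrow> bool" where
  "C2_fun f \<longleftrightarrow> (\<exists>f' f''. (\<forall>u. (f has_vector_derivative f' u) (at u)) \<and>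
      (\<forall>u. (f' has_vector_derivative f'' u) (at u)) \<and> continuous_on UNIV f'')"

definition prob_out :: "('m \<Rightarrow> real \<Rightarrow> complex^'d^'d) \<Rightarrow> complex^'d^'d \<Rightarrow> real \<Rightarrow> 'm \<Rightarrow> real" where
  "prob_out M \<rho> \<beta> \<mu> = Re (ctrace (M \<mu> \<beta> ** \<rho> ** cadj (M \<mu> \<beta>)))"

definition a_coef :: "complex^'d^'d \<Rightarrow> ('m \<Rightarrow> real \<Rightarrow> complex^'d^'d) \<Rightarrow> complex^'d^'d \<Rightarrow> real \<Rightarrow> 'm \<Rightarrow> 'd \<Rightarrow> real" where
  "a_coef U M \<rho> \<beta> \<mu> n = Re (bdiag U (M \<mu> \<beta> ** \<rho> ** cadj (M \<mu> \<beta>)) n)"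

definition Q1 :: "complex^'d^'d \<Rightarrow> ('m \<Rightarrow> real \<Rightarrow> complex^'d^'d) \<Rightarrow> complex^'d^'d \<Rightarrow> real \<Rightarrow> real" where
  "Q1 U M \<rho> \<beta> = (\<Sum>n\<in>UNIV. \<Sum>(\<mu>,\<nu>)\<in>{(\<mu>,\<nu>). prob_out M \<rho> \<beta> \<mu> * prob_out M \<rho> \<beta> \<nu> > 0}.
      prob_out M \<rho> \<beta> \<mu> * prob_out M \<rho> \<beta> \<nu> / 4 *
      (a_coef U M \<rho> \<beta> \<mu> n / prob_out M \<rho> \<beta> \<mu> - a_coef U M \<rho> \<beta> \<nu> n / prob_out M \<rho> \<beta> \<nu>)^2)"

end

theory Submission
  imports Defs
begin

lemma C2_lip:
  fixes f :: "real \<Rightarrow> 'a::real_normed_vector"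
  assumes "C2_fun f" "ut > 0"
  shows "\<exists>L\<ge>0. \<forall>\<beta>. \<bar>\<beta>\<bar> \<le> ut \<longrightarrow> norm (f \<beta> - f 0) \<le> L * \<bar>\<beta>\<bar>"
proof -
  obtain f' f'' where d1: "\<And>u. (f has_vector_derivative f' u) (at u)"
    and d2: "\<And>u. (f' has_vector_derivative f'' u) (at u)"
    using assms(1) unfolding C2_fun_def by blast
  have "continuous_on {-ut..ut} f'"
    using d2 by (meson continuous_at_imp_continuous_on has_vector_derivative_continuous)
  then have "bounded (f' ` {-ut..ut})"
    by (intro compact_imp_bounded compact_continuous_image) auto
  then obtain B where B: "B > 0" "\<And>x. x \<in> {-ut..ut} \<Longrightarrow> norm (f' x) \<le> B"
    by (auto simp: bounded_pos)
  have "norm (f \<beta> - f 0) \<le> B * \<bar>\<beta>\<bar>" if "\<bar>\<beta>\<bar> \<le> ut" for \<beta>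
  proof -
    have "norm (f \<beta> - f 0) \<le> B * norm (\<beta> - 0)"
    proof (rule differentiable_bound[where S="{-ut..ut}" and f' = "\<lambda>x h. h *\<^sub>R f' x"])
      show "convex {-ut..ut}" by simp
      show "(f has_derivative (\<lambda>h. h *\<^sub>R f' x)) (at x within {-ut..ut})" for x
        using d1[of x] unfolding has_vector_derivative_def
        using has_derivative_at_withinI by blast
      show "onorm (\<lambda>h. h *\<^sub>R f' x) \<le> B" if "x \<in> {-ut..ut}" for x
        using B(2)[OF that] onorm_scaleR_left[OF bounded_linear_ident, of "f' x"]
        by (simp add: onorm_id)
      show "\<beta> \<in> {-ut..ut}" using that by auto
      show "0 \<in> {-ut..ut}" using assms(2) by auto
    qed
    then show ?thesis by simp
  qed
  then show ?thesis using B(1) by (intro exI[of _ B]) auto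
qed



definition l1 :: "complex^'n^'m \<Rightarrow> real" where
  "l1 A = (\<Sum>i\<in>UNIV. \<Sum>j\<in>UNIV. cmod (A $ i $ j))"

lemma l1_nonneg: "l1 A \<ge> 0"
  unfolding l1_def by (intro sum_nonneg norm_ge_zero)

lemma entry_le_l1: "cmod (A $ i $ j) \<le> l1 A"
proof -
  have "cmod (A $ i $ j) \<le> (\<Sum>j\<in>UNIV. cmod (A $ i $ j))"
    by (rule member_le_sum) auto
  also have "\<dots> \<le> l1 A" unfolding l1_def
    by (rule member_le_sum[where f="\<lambda>i. \<Sum>j\<in>UNIV. cmod (A $ i $ j)"]) (auto intro: sum_nonneg)
  finally show ?thesis .
qed

lemma l1_add: "l1 (A + B) \<le> l1 A + l1 B"
  unfolding l1_def by (auto simp: sum.distrib[symmetric] intro!: sum_mono norm_triangle_ineq)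

lemma l1_diff: "l1 (A - B) \<le> l1 A + l1 B"
  unfolding l1_def by (auto simp: sum.distrib[symmetric] intro!: sum_mono norm_triangle_ineq4)

lemma l1_cadj: "l1 (cadj A) = l1 A"
  unfolding l1_def cadj_def by simp (rule sum.swap)

lemma l1_le_norm: "l1 (A::complex^'n^'m) \<le> real CARD('m) * real CARD('n) * norm A"
proof -
  have "l1 A \<le> (\<Sum>i\<in>(UNIV::'m set). \<Sum>j\<in>(UNIV::'n set). norm A)"
    unfolding l1_def
  proof (intro sum_mono)
    fix i j
    have "cmod (A $ i $ j) \<le> norm (A $ i)" by (rule Finite_Cartesian_Product.norm_nth_le)
    also have "\<dots> \<le> norm A" by (rule Finite_Cartesian_Product.norm_nth_le)
    finally show "cmod (A $ i $ j) \<le> norm A" .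
  qed
  then show ?thesis by simp
qed

lemma l1_mult: "l1 ((A::complex^'k^'m) ** (B::complex^'n^'k)) \<le> l1 A * l1 B"
proof -
  have "l1 (A ** B) \<le> (\<Sum>i\<in>UNIV. \<Sum>j\<in>UNIV. \<Sum>k\<in>UNIV. cmod (A$i$k) * cmod (B$k$j))"
    unfolding l1_def matrix_matrix_mult_def
    by (auto intro!: sum_mono order.trans[OF norm_sum] simp: norm_mult)
  also have "\<dots> = (\<Sum>i\<in>UNIV. \<Sum>k\<in>UNIV. cmod (A$i$k) * (\<Sum>j\<in>UNIV. cmod (B$k$j)))"
    by (intro sum.cong refl, subst sum.swap) (simp add: sum_distrib_left)
  also have "\<dots> \<le> (\<Sum>i\<in>UNIV. \<Sum>k\<in>UNIV. cmod (A$i$k) * l1 B)"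
  proof (intro sum_mono mult_left_mono)
    fix k show "(\<Sum>j\<in>UNIV. cmod (B$k$j)) \<le> l1 B" unfolding l1_def
      by (rule member_le_sum[where f="\<lambda>i. \<Sum>j\<in>UNIV. cmod (B $ i $ j)"]) (auto intro: sum_nonneg)
  qed auto
  also have "\<dots> = l1 A * l1 B" unfolding l1_def by (simp add: sum_distrib_right)
  finally show ?thesis .
qed


lemma cadj_mult: "cadj (A ** B) = cadj B ** cadj A"
  unfolding cadj_def matrix_matrix_mult_def by (simp add: vec_eq_iff mult.commute)

lemma cadj_cadj[simp]: "cadj (cadj A) = A"
  unfolding cadj_def by (simp add: vec_eq_iff)

lemma cadj_diff: "cadj (A - B) = cadj A - cadj B"
  unfolding cadj_def by (simp add: vec_eq_iff)

lemma matrix_sub_ldistrib: "(A::'a::ring_1^'n^'m) ** (B - C) = A ** B - A ** C"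
  by (simp add: matrix_matrix_mult_def vec_eq_iff right_diff_distrib sum_subtractf)

lemma matrix_sub_rdistrib: "((B::'a::ring_1^'n^'m) - C) ** A = B ** A - C ** A"
  by (simp add: matrix_matrix_mult_def vec_eq_iff left_diff_distrib sum_subtractf)

lemma ctrace_diff: "ctrace (A - B) = ctrace A - ctrace B"
  unfolding ctrace_def by (simp add: sum_subtractf)

lemma ctrace_le: "cmod (ctrace A) \<le> l1 A"
proof -
  have "cmod (ctrace A) \<le> (\<Sum>i\<in>UNIV. cmod (A$i$i))" unfolding ctrace_def by (rule norm_sum)
  also have "\<dots> \<le> l1 A" unfolding l1_def
    by (intro sum_mono) (rule member_le_sum, auto)
  finally show ?thesis .
qed

lemma ctrace_comm: "ctrace ((A::complex^'n^'m) ** (B::complex^'m^'n)) = ctrace (B ** A)"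
  unfolding ctrace_def matrix_matrix_mult_def
  by simp (subst sum.swap, simp add: mult.commute)

lemma matrix_add_rdistrib': "((B::'a::semiring_1^'n^'m) + C) ** A = B ** A + C ** A"
  by (simp add: matrix_matrix_mult_def vec_eq_iff distrib_right sum.distrib)

lemma sum_matrix_left: "A ** (\<Sum>x\<in>S. f x) = (\<Sum>x\<in>S. A ** f x)"
  by (induction S rule: infinite_finite_induct) (simp_all add: matrix_add_ldistrib)

lemma sum_matrix_right: "(\<Sum>x\<in>S. f x) ** A = (\<Sum>x\<in>S. f x ** A)"
  by (induction S rule: infinite_finite_induct) (simp_all add: matrix_add_rdistrib')



definition qf :: "complex^'d^'d \<Rightarrow> complex^'d \<Rightarrow> complex" where
  "qf A x = (\<Sum>i\<in>UNIV. \<Sum>j\<in>UNIV. cnj (x $ i) * A $ i $ j * x $ j)"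

lemma psd_qf: "psd_mat A \<Longrightarrow> qf A x \<in> \<real> \<and> Re (qf A x) \<ge> 0"
  unfolding psd_mat_def qf_def Let_def by blast

lemma conj_diag: "(cadj B ** A ** B) $ n $ n = qf A (\<chi> j. B $ j $ n)"
  unfolding qf_def cadj_def matrix_matrix_mult_def
  by (simp add: sum_distrib_right) (subst sum.swap, simp add: mult.assoc)

lemma psd_conj_diag: "psd_mat A \<Longrightarrow> (cadj B ** A ** B) $ n $ n \<in> \<real> \<and> Re ((cadj B ** A ** B) $ n $ n) \<ge> 0"
  using psd_qf[of A "\<chi> j. B $ j $ n"] conj_diag[of B A n] by simp

definition bil :: "complex^'d^'d \<Rightarrow> complex^'d \<Rightarrow> complex^'d \<Rightarrow> complex" where
  "bil A x y = (\<Sum>i\<in>UNIV. \<Sum>j\<in>UNIV. cnj (x $ i) * A $ i $ j * y $ j)"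

lemma bil_add1: "bil A (x + y) z = bil A x z + bil A y z"
  unfolding bil_def by (simp add: distrib_left distrib_right sum.distrib)

lemma bil_add2: "bil A z (x + y) = bil A z x + bil A z y"
  unfolding bil_def by (simp add: distrib_left distrib_right sum.distrib)

definition ev :: "'d \<Rightarrow> complex \<Rightarrow> complex^'d" where
  "ev i a = (\<chi> k. if k = i then a else 0)"

lemma bil_ev: "bil A (ev i a) (ev j b) = cnj a * A$i$j * b"
proof -
  have "\<And>p q. cnj ((ev i a) $ p) * A$p$q * (ev j b) $ q
     = (if p = i then (if q = j then cnj a * A$p$q * b else 0) else 0)" by (simp add: ev_def)
  moreover have "\<And>p. (\<Sum>q\<in>UNIV. if p = i then if q = j then cnj a * A$p$q * b else 0 else 0) = (if p = i then cnj a * A$i$j * b else 0)"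
    by (auto simp: sum.delta)
  ultimately show ?thesis unfolding bil_def by (simp add: sum.delta)
qed

lemma qf_two:
  fixes A :: "complex^'d^'d"
  shows "qf A (ev i a + ev j b)
     = cnj a * A$i$i * a + cnj a * A$i$j * b + cnj b * A$j$i * a + cnj b * A$j$j * b"
proof -
  have "qf A x = bil A x x" for x unfolding qf_def bil_def by simp
  then show ?thesis by (simp add: bil_add1 bil_add2 bil_ev)
qed

lemma qf_one:
  fixes A :: "complex^'d^'d"
  shows "qf A (\<chi> k. if k = i then 1 else 0) = A$i$i"
proof -
  have "\<And>a b. cnj ((\<chi> k. if k = i then 1 else 0) $ a) * A$a$b * (\<chi> k. if k = i then 1 else 0) $ b
     = (if a = i then (if b = i then A$a$b else 0) else 0)" by simp
  moreover have "\<And>a. (\<Sum>b\<in>UNIV. if a = i then if b = i then A$a$b else 0 else 0) = (if a = i then A$i$i else 0)"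
    by (auto simp: sum.delta)
  ultimately show ?thesis unfolding qf_def by (simp add: sum.delta)
qed



lemma dens_diag:
  assumes "density_mat (\<rho>::complex^'d^'d)"
  shows "Im (\<rho>$i$i) = 0 \<and> 0 \<le> Re (\<rho>$i$i) \<and> Re (\<rho>$i$i) \<le> 1"
proof -
  have psd: "psd_mat \<rho>" and tr: "ctrace \<rho> = 1" using assms unfolding density_mat_def by auto
  have d: "\<rho>$k$k \<in> \<real> \<and> Re (\<rho>$k$k) \<ge> 0" for k
    using psd_qf[OF psd, of "\<chi> j. if j = k then 1 else 0"] qf_one[of \<rho> k] by simp
  have "Re (\<rho>$i$i) \<le> (\<Sum>k\<in>UNIV. Re (\<rho>$k$k))"
    by (rule member_le_sum) (use d in auto)
  also have "\<dots> = 1" using tr unfolding ctrace_def by (metis Re_sum one_complex.simps(1))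
  finally show ?thesis using d[of i] by (auto simp: complex_is_Real_iff)
qed

lemma dens_entry:
  assumes "density_mat (\<rho>::complex^'d^'d)"
  shows "cmod (\<rho>$i$j) \<le> 2"
proof -
  have psd: "psd_mat \<rho>" using assms unfolding density_mat_def by auto
  have q: "Im (qf \<rho> (ev i 1 + ev j b)) = 0 \<and> Re (qf \<rho> (ev i 1 + ev j b)) \<ge> 0" for b
    using psd_qf[OF psd] by (simp add: complex_is_Real_iff)
  note qs = q[of 1, unfolded qf_two] q[of "-1", unfolded qf_two] q[of "\<i>", unfolded qf_two]
    q[of "-\<i>", unfolded qf_two]
  have di: "Im (\<rho>$i$i) = 0 \<and> 0 \<le> Re (\<rho>$i$i) \<and> Re (\<rho>$i$i) \<le> 1"
   and dj: "Im (\<rho>$j$j) = 0 \<and> 0 \<le> Re (\<rho>$j$j) \<and> Re (\<rho>$j$j) \<le> 1"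
    using dens_diag[OF assms] by auto
  have "\<bar>Re (\<rho>$i$j)\<bar> \<le> 1" "\<bar>Im (\<rho>$i$j)\<bar> \<le> 1"
    using qs di dj by (auto simp: algebra_simps)
  then show ?thesis using cmod_le[of "\<rho>$i$j"] by linarith
qed

lemma dens_l1: "density_mat (\<rho>::complex^'d^'d) \<Longrightarrow> l1 \<rho> \<le> 2 * real CARD('d) * real CARD('d)"
proof -
  assume a: "density_mat \<rho>"
  have "l1 \<rho> \<le> (\<Sum>i\<in>(UNIV::'d set). \<Sum>j\<in>(UNIV::'d set). 2)"
    unfolding l1_def by (intro sum_mono dens_entry[OF a])
  then show ?thesis by simp
qed



lemma re_ofr: "Re (complex_of_real r * z) = r * Re z" by simp

lemma bdiag_nonneg:
  assumes "psd_mat \<rho>"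
  shows "Re (bdiag U (X ** \<rho> ** cadj X) n) \<ge> 0"
proof -
  have "cadj U ** (X ** \<rho> ** cadj X) ** U = cadj (cadj X ** U) ** \<rho> ** (cadj X ** U)"
    by (simp only: cadj_mult cadj_cadj matrix_mul_assoc)
  then show ?thesis unfolding bdiag_def using psd_conj_diag[OF assms, of "cadj X ** U" n] by simp
qed

lemma sum_bdiag:
  assumes "unitary_mat U"
  shows "(\<Sum>n\<in>UNIV. Re (bdiag U A n)) = Re (ctrace A)"
proof -
  have "(\<Sum>n\<in>UNIV. Re (bdiag U A n)) = Re (ctrace (cadj U ** (A ** U)))"
    unfolding bdiag_def ctrace_def by (simp only: matrix_mul_assoc Re_sum)
  also have "ctrace (cadj U ** (A ** U)) = ctrace ((A ** U) ** cadj U)" by (rule ctrace_comm)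
  also have "(A ** U) ** cadj U = A" using assms unfolding unitary_mat_def
    by (simp only: matrix_mul_assoc[symmetric] matrix_mul_rid)
  finally show ?thesis .
qed

lemma diag_entry: "(diag_mat c ** R ** cadj (diag_mat c)) $ n $ n = c n * R $ n $ n * cnj (c n)"
proof -
  have "(diag_mat c ** R) $ n $ k = c n * R $ n $ k" for k
  proof -
    have "(diag_mat c ** R) $ n $ k = (\<Sum>j\<in>UNIV. if j = n then c n * R $ j $ k else 0)"
      unfolding diag_mat_def matrix_matrix_mult_def by (simp only: vec_lambda_beta) (intro sum.cong, auto)
    then show ?thesis by (simp add: sum.delta)
  qed
  moreover have "(diag_mat c ** R ** cadj (diag_mat c)) $ n $ n
     = (\<Sum>k\<in>UNIV. if k = n then (diag_mat c ** R) $ n $ k * cnj (c n) else 0)"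
    unfolding matrix_matrix_mult_def[of "diag_mat c ** R"] vec_lambda_beta
    by (intro sum.cong) (auto simp: cadj_def diag_mat_def)
  ultimately show ?thesis by (simp add: sum.delta)
qed

lemma a_zero:
  assumes U: "unitary_mat U"
  shows "Re (bdiag U ((U ** diag_mat c ** cadj U) ** \<rho> ** cadj (U ** diag_mat c ** cadj U)) n)
         = (cmod (c n))^2 * Re (bdiag U \<rho> n)"
proof -
  have uu: "cadj U ** U = mat 1" using U unfolding unitary_mat_def by auto
  have uuR: "cadj U ** (U ** X) = X" for X :: "complex^'a^'a"
    by (simp only: uu matrix_mul_assoc matrix_mul_lid)
  have "cadj U ** ((U ** diag_mat c ** cadj U) ** \<rho> ** cadj (U ** diag_mat c ** cadj U)) ** U
      = diag_mat c ** (cadj U ** \<rho> ** U) ** cadj (diag_mat c)"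
    by (simp only: cadj_mult cadj_cadj matrix_mul_assoc[symmetric] uu uuR matrix_mul_rid)
  then have "bdiag U ((U ** diag_mat c ** cadj U) ** \<rho> ** cadj (U ** diag_mat c ** cadj U)) n
     = c n * bdiag U \<rho> n * cnj (c n)"
    unfolding bdiag_def by (simp add: diag_entry)
  also have "\<dots> = (c n * cnj (c n)) * bdiag U \<rho> n" by (simp only: mult_ac)
  also have "\<dots> = of_real ((cmod (c n))^2) * bdiag U \<rho> n"
    by (simp only: complex_norm_square)
  finally show ?thesis by (simp only: re_ofr)
qed

lemma w_sum:
  fixes c :: "'m::finite \<Rightarrow> 'd::finite \<Rightarrow> complex"
  assumes U: "unitary_mat U"
    and K: "(\<Sum>\<mu>\<in>UNIV. cadj (U ** diag_mat (c \<mu>) ** cadj U) ** (U ** diag_mat (c \<mu>) ** cadj U)) = mat 1"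
  shows "(\<Sum>\<mu>\<in>UNIV. (cmod (c \<mu> n))^2) = 1"
proof -
  have uu: "cadj U ** U = mat 1" using U unfolding unitary_mat_def by auto
  have uuR: "cadj U ** (U ** X) = X" for X :: "complex^'d^'d"
    by (simp only: uu matrix_mul_assoc matrix_mul_lid)
  have "mat 1 = cadj U ** (\<Sum>\<mu>\<in>UNIV. cadj (U ** diag_mat (c \<mu>) ** cadj U) ** (U ** diag_mat (c \<mu>) ** cadj U)) ** U"
    using K uu by simp
  also have "\<dots> = (\<Sum>\<mu>\<in>UNIV. cadj U ** (cadj (U ** diag_mat (c \<mu>) ** cadj U) ** (U ** diag_mat (c \<mu>) ** cadj U)) ** U)"
    by (simp only: sum_matrix_left sum_matrix_right)
  also have "\<dots> = (\<Sum>\<mu>\<in>UNIV. cadj (diag_mat (c \<mu>)) ** diag_mat (c \<mu>))"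
    by (simp only: cadj_mult cadj_cadj matrix_mul_assoc[symmetric] uu uuR matrix_mul_rid)
  finally have "(mat 1 :: complex^'d^'d) $ n $ n = (\<Sum>\<mu>\<in>UNIV. cadj (diag_mat (c \<mu>)) ** diag_mat (c \<mu>)) $ n $ n"
    by (rule arg_cong)
  also have "\<dots> = (\<Sum>\<mu>\<in>UNIV. cnj (c \<mu> n) * c \<mu> n)"
    unfolding sum_component
  proof (intro sum.cong refl)
    fix \<mu>
    have "(cadj (diag_mat (c \<mu>)) ** diag_mat (c \<mu>)) $ n $ n = (\<Sum>k\<in>UNIV. if k = n then cnj (c \<mu> n) * c \<mu> n else 0)"
      unfolding matrix_matrix_mult_def vec_lambda_beta
      by (intro sum.cong) (auto simp: cadj_def diag_mat_def)
    then show "(cadj (diag_mat (c \<mu>)) ** diag_mat (c \<mu>)) $ n $ n = cnj (c \<mu> n) * c \<mu> n"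
      by (simp add: sum.delta)
  qed
  also have "\<dots> = (\<Sum>\<mu>\<in>UNIV. of_real ((cmod (c \<mu> n))^2))"
    by (simp only: complex_norm_square mult.commute)
  also have "\<dots> = of_real (\<Sum>\<mu>\<in>UNIV. (cmod (c \<mu> n))^2)"
    by (simp only: of_real_sum)
  finally have "(mat 1 :: complex^'d^'d) $ n $ n = of_real (\<Sum>\<mu>\<in>UNIV. (cmod (c \<mu> n))^2)" .
  then show ?thesis unfolding mat_def vec_lambda_beta by (metis if_True of_real_eq_1_iff)
qed



lemma q1_zero:
  fixes p :: "'m::finite \<Rightarrow> real" and a :: "'m \<Rightarrow> 'd::finite \<Rightarrow> real"
  assumes a_nn: "\<And>\<mu> n. a \<mu> n \<ge> 0" and psum: "\<And>\<mu>. p \<mu> = (\<Sum>n\<in>UNIV. a \<mu> n)"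
    and Q: "(\<Sum>n\<in>UNIV. \<Sum>(\<mu>,\<nu>)\<in>{(\<mu>,\<nu>). p \<mu> * p \<nu> > 0}.
      p \<mu> * p \<nu> / 4 * (a \<mu> n / p \<mu> - a \<nu> n / p \<nu>)^2) = 0"
  shows "a \<mu> n * p \<nu> = a \<nu> n * p \<mu>"
proof -
  have p_nn: "p x \<ge> 0" for x using psum[of x] a_nn by (simp add: sum_nonneg)
  have a_le: "a x k \<le> p x" for x k
    unfolding psum[of x] by (rule member_le_sum) (use a_nn in auto)
  let ?P = "{(\<mu>,\<nu>). p \<mu> * p \<nu> > 0}"
  let ?t = "\<lambda>n (\<mu>,\<nu>). p \<mu> * p \<nu> / 4 * (a \<mu> n / p \<mu> - a \<nu> n / p \<nu>)^2"
  have tnn: "?t n x \<ge> 0" if "x \<in> ?P" for n x using that by auto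
  have fin: "finite ?P" by simp
  have inner_nn: "(\<Sum>x\<in>?P. ?t n x) \<ge> 0" for n by (rule sum_nonneg) (use tnn in auto)
  have "(\<Sum>x\<in>?P. ?t n x) = 0"
    using Q inner_nn by (subst (asm) sum_nonneg_eq_0_iff) auto
  then have tz: "?t n x = 0" if "x \<in> ?P" for x
    using sum_nonneg_eq_0_iff[OF fin, of "?t n"] tnn that by blast
  show ?thesis
  proof (cases "p \<mu> * p \<nu> > 0")
    case True
    have "a \<mu> n / p \<mu> = a \<nu> n / p \<nu>" using tz[of "(\<mu>,\<nu>)"] True by auto
    moreover have "p \<mu> \<noteq> 0" "p \<nu> \<noteq> 0" using True by auto
    ultimately show ?thesis by (simp add: field_simps)
  next
    case False
    then have "p \<mu> = 0 \<or> p \<nu> = 0" using p_nn[of \<mu>] p_nn[of \<nu>]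
      by (auto simp: zero_less_mult_iff)
    then show ?thesis
    proof
      assume "p \<mu> = 0" then have "a \<mu> n = 0" using a_le[of \<mu> n] a_nn[of \<mu> n] by simp
      then show ?thesis using \<open>p \<mu> = 0\<close> by simp
    next
      assume "p \<nu> = 0" then have "a \<nu> n = 0" using a_le[of \<nu> n] a_nn[of \<nu> n] by simp
      then show ?thesis using \<open>p \<nu> = 0\<close> by simp
    qed
  qed
qed

lemma comb:
  fixes q :: "'d::finite \<Rightarrow> real" and w :: "'m::finite \<Rightarrow> 'd \<Rightarrow> real"
  assumes q_nn: "\<And>n. q n \<ge> 0" and qsum: "(\<Sum>n\<in>UNIV. q n) = 1"
    and wsum: "\<And>n. (\<Sum>\<mu>\<in>UNIV. w \<mu> n) = 1"
    and gam: "\<gamma> > 0" "\<And>n n'. n \<noteq> n' \<Longrightarrow> \<exists>\<mu>. \<bar>w \<mu> n - w \<mu> n'\<bar> \<ge> \<gamma>"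
    and F: "\<And>\<mu> \<nu> n. \<bar>w \<mu> n * q n * (\<Sum>k\<in>UNIV. w \<nu> k * q k) - w \<nu> n * q n * (\<Sum>k\<in>UNIV. w \<mu> k * q k)\<bar> \<le> E"
  shows "\<exists>N. q N \<ge> 1 - real CARD('d) * real CARD('d) * (2 * real CARD('m) * E) / \<gamma>"
proof -
  define pm where "pm \<mu> = (\<Sum>k\<in>UNIV. w \<mu> k * q k)" for \<mu>
  define m where "m = real CARD('m)"
  define d where "d = real CARD('d)"
  have E0: "E \<ge> 0" using F[of undefined undefined undefined] by linarith
  have q_le: "q n \<le> 1" for n unfolding qsum[symmetric] by (rule member_le_sum) (use q_nn in auto)
  have spm: "(\<Sum>\<nu>\<in>UNIV. pm \<nu>) = 1"
    unfolding pm_def by (subst sum.swap) (simp add: sum_distrib_right[symmetric] wsum qsum)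
  have S1: "\<bar>q n * (w \<mu> n - pm \<mu>)\<bar> \<le> m * E" for \<mu> n
  proof -
    have "(\<Sum>\<nu>\<in>UNIV. w \<mu> n * q n * pm \<nu> - w \<nu> n * q n * pm \<mu>)
        = w \<mu> n * q n * (\<Sum>\<nu>\<in>UNIV. pm \<nu>) - q n * pm \<mu> * (\<Sum>\<nu>\<in>UNIV. w \<nu> n)"
      by (simp add: sum_subtractf sum_distrib_left sum_distrib_right mult_ac)
    also have "\<dots> = q n * (w \<mu> n - pm \<mu>)" by (simp add: spm wsum algebra_simps)
    finally have eq: "q n * (w \<mu> n - pm \<mu>) = (\<Sum>\<nu>\<in>UNIV. w \<mu> n * q n * pm \<nu> - w \<nu> n * q n * pm \<mu>)" ..
    have "\<bar>\<Sum>\<nu>\<in>UNIV. w \<mu> n * q n * pm \<nu> - w \<nu> n * q n * pm \<mu>\<bar> \<le> (\<Sum>\<nu>\<in>(UNIV::'m set). E)"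
      by (rule order_trans[OF sum_abs]) (intro sum_mono, use F pm_def in auto)
    then show ?thesis unfolding eq m_def by simp
  qed
  have S2: "\<gamma> * (q n * q n') \<le> 2 * m * E" if nn: "n \<noteq> n'" for n n'
  proof -
    obtain \<mu> where mu: "\<bar>w \<mu> n - w \<mu> n'\<bar> \<ge> \<gamma>" using gam(2)[OF nn] by blast
    define X where "X = q n * (w \<mu> n - pm \<mu>)"
    define Y where "Y = q n' * (w \<mu> n' - pm \<mu>)"
    have eq: "q n * q n' * (w \<mu> n - w \<mu> n') = q n' * X - q n * Y"
      unfolding X_def Y_def by (simp add: algebra_simps)
    have "\<bar>q n * q n' * (w \<mu> n - w \<mu> n')\<bar> \<le> \<bar>q n' * X\<bar> + \<bar>q n * Y\<bar>"
      unfolding eq by (rule abs_triangle_ineq4)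
    also have "\<dots> = q n' * \<bar>X\<bar> + q n * \<bar>Y\<bar>" using q_nn[of n] q_nn[of n'] by (simp add: abs_mult)
    finally have "\<bar>q n * q n' * (w \<mu> n - w \<mu> n')\<bar> \<le> q n' * \<bar>q n * (w \<mu> n - pm \<mu>)\<bar> + q n * \<bar>q n' * (w \<mu> n' - pm \<mu>)\<bar>"
      unfolding X_def Y_def .
    also have "\<dots> \<le> 1 * (m * E) + 1 * (m * E)"
      by (intro add_mono mult_mono S1 q_le) (use q_nn in auto)
    finally have h: "q n * q n' * \<bar>w \<mu> n - w \<mu> n'\<bar> \<le> 2 * m * E"
      using q_nn[of n] q_nn[of n'] by (simp add: abs_mult mult_ac)
    have "\<gamma> * (q n * q n') \<le> \<bar>w \<mu> n - w \<mu> n'\<bar> * (q n * q n')"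
      by (rule mult_right_mono[OF mu]) (use q_nn in auto)
    then show ?thesis using h by (simp add: mult_ac)
  qed
  have "Max (range q) \<in> range q" by (rule Max_in) auto
  then obtain N where "q N = Max (range q)" by (metis rangeE)
  then have N: "\<And>n. q n \<le> q N" by simp
  have dq: "1 \<le> d * q N"
  proof -
    have "1 = (\<Sum>n\<in>UNIV. q n)" using qsum by simp
    also have "\<dots> \<le> (\<Sum>n\<in>(UNIV::'d set). q N)" by (rule sum_mono) (use N in auto)
    finally show ?thesis unfolding d_def by simp
  qed
  have qn: "q n \<le> d * (2 * m * E) / \<gamma>" if "n \<noteq> N" for n
  proof -
    have "q n \<le> q n * (d * q N)" using mult_left_mono[OF dq q_nn[of n]] by simp
    then have "\<gamma> * q n \<le> \<gamma> * (q n * (d * q N))"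
      by (rule mult_left_mono) (use gam in auto)
    also have "\<dots> = d * (\<gamma> * (q n * q N))" by (simp add: mult_ac)
    also have "\<dots> \<le> d * (2 * m * E)" using S2[OF that] unfolding d_def by (simp add: mult_left_mono)
    finally show ?thesis using gam(1) by (simp add: pos_le_divide_eq mult_ac)
  qed
  have "1 - q N = (\<Sum>n\<in>UNIV - {N}. q n)"
    using qsum sum.remove[of "UNIV::'d set" N q] by simp
  also have "\<dots> \<le> (\<Sum>n\<in>UNIV - {N}. d * (2 * m * E) / \<gamma>)" by (rule sum_mono) (use qn in auto)
  also have "\<dots> \<le> d * (d * (2 * m * E) / \<gamma>)"
  proof -
    have "card (UNIV - {N}) \<le> CARD('d)" by (rule card_mono) auto
    moreover have "d * (2 * m * E) / \<gamma> \<ge> 0" using E0 gam(1) unfolding d_def m_def by simp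
    ultimately have "real (card (UNIV - {N})) * (d * (2 * m * E) / \<gamma>) \<le> d * (d * (2 * m * E) / \<gamma>)"
      unfolding d_def by (intro mult_right_mono) auto
    then show ?thesis by simp
  qed
  finally show ?thesis unfolding d_def m_def by (intro exI[of _ N]) (simp add: field_simps)
qed



lemma sand_diff:
  fixes X Y \<rho> :: "complex^'d^'d"
  shows "X ** \<rho> ** cadj X - Y ** \<rho> ** cadj Y = (X - Y) ** \<rho> ** cadj X + Y ** \<rho> ** cadj (X - Y)"
  by (simp add: matrix_sub_rdistrib matrix_sub_ldistrib cadj_diff)

lemma l1_sand: "l1 (X ** \<rho> ** cadj X) \<le> l1 X * l1 \<rho> * l1 (X::complex^'d^'d)"
proof -
  have "l1 (X ** \<rho> ** cadj X) \<le> l1 (X ** \<rho>) * l1 (cadj X)" by (rule l1_mult)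
  also have "\<dots> \<le> (l1 X * l1 \<rho>) * l1 X"
    by (simp only: l1_cadj) (intro mult_right_mono l1_mult l1_nonneg)
  finally show ?thesis .
qed

lemma l1_sand_diff:
  fixes X Y \<rho> :: "complex^'d^'d"
  shows "l1 (X ** \<rho> ** cadj X - Y ** \<rho> ** cadj Y) \<le> l1 (X - Y) * l1 \<rho> * l1 X + l1 Y * l1 \<rho> * l1 (X - Y)"
proof -
  have "l1 (X ** \<rho> ** cadj X - Y ** \<rho> ** cadj Y) \<le> l1 ((X - Y) ** \<rho> ** cadj X) + l1 (Y ** \<rho> ** cadj (X - Y))"
    unfolding sand_diff by (rule l1_add)
  also have "\<dots> \<le> l1 (X - Y) * l1 \<rho> * l1 X + l1 Y * l1 \<rho> * l1 (X - Y)"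
  proof (rule add_mono)
    have "l1 ((X - Y) ** \<rho> ** cadj X) \<le> l1 ((X - Y) ** \<rho>) * l1 (cadj X)" by (rule l1_mult)
    also have "\<dots> \<le> (l1 (X - Y) * l1 \<rho>) * l1 X"
      by (simp only: l1_cadj) (intro mult_right_mono l1_mult l1_nonneg)
    finally show "l1 ((X - Y) ** \<rho> ** cadj X) \<le> l1 (X - Y) * l1 \<rho> * l1 X" .
    have "l1 (Y ** \<rho> ** cadj (X - Y)) \<le> l1 (Y ** \<rho>) * l1 (cadj (X - Y))" by (rule l1_mult)
    also have "\<dots> \<le> (l1 Y * l1 \<rho>) * l1 (X - Y)"
      by (simp only: l1_cadj) (intro mult_right_mono l1_mult l1_nonneg)
    finally show "l1 (Y ** \<rho> ** cadj (X - Y)) \<le> l1 Y * l1 \<rho> * l1 (X - Y)" .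
  qed
  finally show ?thesis .
qed

lemma bdiag_bound: "\<bar>Re (bdiag U A n)\<bar> \<le> l1 U * l1 A * l1 (U::complex^'d^'d)"
proof -
  have "\<bar>Re (bdiag U A n)\<bar> \<le> cmod (bdiag U A n)" by (rule abs_Re_le_cmod)
  also have "\<dots> \<le> l1 (cadj U ** A ** U)" unfolding bdiag_def by (rule entry_le_l1)
  also have "\<dots> \<le> l1 (cadj U ** A) * l1 U" by (rule l1_mult)
  also have "\<dots> \<le> (l1 U * l1 A) * l1 U"
    by (intro mult_right_mono l1_nonneg) (metis l1_cadj l1_mult)
  finally show ?thesis .
qed

lemma bdiag_diff: "bdiag U A n - bdiag U B n = bdiag U (A - B) n"
  unfolding bdiag_def by (simp add: matrix_sub_ldistrib matrix_sub_rdistrib)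

lemma trace_bound: "\<bar>Re (ctrace A)\<bar> \<le> l1 A"
  using abs_Re_le_cmod ctrace_le order_trans by blast

lemma prod_diff_bound:
  fixes x y x0 y0 :: real
  assumes "\<bar>x - x0\<bar> \<le> D" "\<bar>y - y0\<bar> \<le> D" "\<bar>y\<bar> \<le> P" "\<bar>x0\<bar> \<le> P"
  shows "\<bar>x * y - x0 * y0\<bar> \<le> 2 * P * D"
proof -
  have "x * y - x0 * y0 = (x - x0) * y + x0 * (y - y0)" by (simp add: algebra_simps)
  then have "\<bar>x * y - x0 * y0\<bar> \<le> \<bar>x - x0\<bar> * \<bar>y\<bar> + \<bar>x0\<bar> * \<bar>y - y0\<bar>"
    by (simp add: abs_mult[symmetric] abs_triangle_ineq)
  also have "\<dots> \<le> D * P + P * D"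
    by (intro add_mono mult_mono) (use assms in auto)
  finally show ?thesis by (simp add: mult_ac)
qed



theorem lemma3:
  fixes M :: "'m::finite \<Rightarrow> real \<Rightarrow> complex^'d::finite^'d"
    and U :: "complex^'d^'d"
    and c :: "'m \<Rightarrow> 'd \<Rightarrow> complex"
    and ut :: real
  assumes U: "unitary_mat U"
    and kraus: "\<And>u. (\<Sum>\<mu>\<in>UNIV. cadj (M \<mu> u) ** M \<mu> u) = mat 1"
    and A1: "\<And>\<mu>. M \<mu> 0 = U ** diag_mat (c \<mu>) ** cadj U"
    and A2: "\<And>n1 n2. n1 \<noteq> n2 \<Longrightarrow> \<exists>\<mu>. (cmod (c \<mu> n1))^2 \<noteq> (cmod (c \<mu> n2))^2"
    and A3: "\<And>\<mu>. C2_fun (M \<mu>)"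
    and ut: "ut > 0"
  shows "\<exists>C>0. \<forall>\<rho> \<beta>. density_mat \<rho> \<and> \<bar>\<beta>\<bar> \<le> ut \<and> Q1 U M \<rho> \<beta> = 0 \<longrightarrow>
           (\<exists>n. Re (bdiag U \<rho> n) \<ge> 1 - C * \<bar>\<beta>\<bar>)"
proof -
  define d where "d = real CARD('d)"
  define m where "m = real CARD('m)"
  have "\<forall>\<mu>. \<exists>L\<ge>0. \<forall>\<beta>. \<bar>\<beta>\<bar> \<le> ut \<longrightarrow> norm (M \<mu> \<beta> - M \<mu> 0) \<le> L * \<bar>\<beta>\<bar>"
    using C2_lip[OF A3 ut] by blast
  then obtain Lf where Lf: "\<And>\<mu>. Lf \<mu> \<ge> 0"
    "\<And>\<mu> \<beta>. \<bar>\<beta>\<bar> \<le> ut \<Longrightarrow> norm (M \<mu> \<beta> - M \<mu> 0) \<le> Lf \<mu> * \<bar>\<beta>\<bar>"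
    by metis
  define L where "L = d * d * (\<Sum>\<mu>\<in>UNIV. Lf \<mu>)"
  have L0: "L \<ge> 0" unfolding L_def d_def using Lf(1) by (simp add: sum_nonneg)
  have Lip: "l1 (M \<mu> \<beta> - M \<mu> 0) \<le> L * \<bar>\<beta>\<bar>" if "\<bar>\<beta>\<bar> \<le> ut" for \<mu> \<beta>
  proof -
    have "l1 (M \<mu> \<beta> - M \<mu> 0) \<le> d * d * norm (M \<mu> \<beta> - M \<mu> 0)"
      using l1_le_norm[of "M \<mu> \<beta> - M \<mu> 0"] unfolding d_def by simp
    also have "\<dots> \<le> d * d * (Lf \<mu> * \<bar>\<beta>\<bar>)"
      by (intro mult_left_mono Lf(2) that) (auto simp: d_def)
    also have "\<dots> \<le> d * d * ((\<Sum>\<mu>\<in>UNIV. Lf \<mu>) * \<bar>\<beta>\<bar>)"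
      by (intro mult_left_mono mult_right_mono member_le_sum) (use Lf(1) in \<open>auto simp: d_def\<close>)
    finally show ?thesis unfolding L_def by (simp add: mult_ac)
  qed
  define B0 where "B0 = (\<Sum>\<mu>\<in>UNIV. l1 (M \<mu> 0))"
  have B0: "l1 (M \<mu> 0) \<le> B0" for \<mu>
    unfolding B0_def by (rule member_le_sum) (auto simp: l1_nonneg)
  define B1 where "B1 = B0 + L * ut"
  have B01: "B0 \<le> B1" unfolding B1_def using L0 ut by simp
  have B1: "l1 (M \<mu> \<beta>) \<le> B1" if "\<bar>\<beta>\<bar> \<le> ut" for \<mu> \<beta>
  proof -
    have "l1 (M \<mu> \<beta>) = l1 (M \<mu> 0 + (M \<mu> \<beta> - M \<mu> 0))" by simp
    also have "\<dots> \<le> l1 (M \<mu> 0) + l1 (M \<mu> \<beta> - M \<mu> 0)" by (rule l1_add)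
    also have "\<dots> \<le> B0 + L * ut"
      using B0[of \<mu>] Lip[OF that, of \<mu>] mult_left_mono[OF that L0] by linarith
    finally show ?thesis unfolding B1_def .
  qed
  have B1nn: "B1 \<ge> 0" using B01 B0[of undefined] l1_nonneg[of "M undefined 0"] by linarith
  define R where "R = 2 * d * d"
  define Ku where "Ku = max 1 (l1 U * l1 U)"
  have Ku1: "Ku \<ge> 1" unfolding Ku_def by simp
  define K1 where "K1 = L * R * B1 + B0 * R * L"
  define Pb where "Pb = Ku * (B1 * R * B1)"
  define Db where "Db = Ku * K1"
  define W where "W \<mu> n = (cmod (c \<mu> n))^2" for \<mu> n
  define S where "S = (\<lambda>(\<mu>,n1,n2). \<bar>W \<mu> n1 - W \<mu> n2\<bar>) ` {(\<mu>,n1,n2). W \<mu> n1 \<noteq> W \<mu> n2}"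
  define \<gamma> where "\<gamma> = (if S = {} then 1 else Min S)"
  have finS: "finite S" unfolding S_def by simp
  have Spos: "x > 0" if "x \<in> S" for x using that unfolding S_def by auto
  have gpos: "\<gamma> > 0"
    unfolding \<gamma>_def using Spos Min_in[OF finS] by auto
  have gam: "\<exists>\<mu>. \<bar>W \<mu> n - W \<mu> n'\<bar> \<ge> \<gamma>" if nn: "n \<noteq> n'" for n n'
  proof -
    obtain \<mu> where mu: "W \<mu> n \<noteq> W \<mu> n'" using A2[OF nn] unfolding W_def by blast
    then have inS: "\<bar>W \<mu> n - W \<mu> n'\<bar> \<in> S" unfolding S_def by (auto intro!: image_eqI[of _ _ "(\<mu>,n,n')"])
    then have "\<gamma> \<le> \<bar>W \<mu> n - W \<mu> n'\<bar>" unfolding \<gamma>_def using Min_le[OF finS inS] by auto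
    then show ?thesis by blast
  qed
  have wsum: "(\<Sum>\<mu>\<in>UNIV. W \<mu> n) = 1" for n
    unfolding W_def by (rule w_sum[OF U]) (use kraus[of 0] in \<open>simp only: A1\<close>)
  define C where "C = d * d * (2 * m * (4 * Pb * Db)) / \<gamma> + 1"
  have C0: "C > 0" unfolding C_def Pb_def Db_def K1_def R_def d_def m_def
    using gpos Ku1 L0 B1nn B01 B0[of undefined] l1_nonneg[of "M undefined 0"]
    by (intro add_nonneg_pos divide_nonneg_pos mult_nonneg_nonneg) auto
  show ?thesis
  proof (intro exI[of _ C] conjI allI impI C0)
    fix \<rho> \<beta>
    assume as: "density_mat \<rho> \<and> \<bar>\<beta>\<bar> \<le> ut \<and> Q1 U M \<rho> \<beta> = 0"
    then have dens: "density_mat \<rho>" and bu: "\<bar>\<beta>\<bar> \<le> ut" and Q: "Q1 U M \<rho> \<beta> = 0" by auto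
    have psd: "psd_mat \<rho>" and tr: "ctrace \<rho> = 1" using dens unfolding density_mat_def by auto
    define q where "q n = Re (bdiag U \<rho> n)" for n
    let ?A = "\<lambda>\<mu> b. M \<mu> b ** \<rho> ** cadj (M \<mu> b)"
    have lr: "l1 \<rho> \<le> R" unfolding R_def d_def by (rule dens_l1[OF dens])
    have lr0: "l1 \<rho> \<ge> 0" by (rule l1_nonneg)
    have R0: "R \<ge> 0" unfolding R_def d_def by simp
    have lU: "l1 U * l1 U \<le> Ku" unfolding Ku_def by simp
    have lU0: "l1 U * l1 U \<ge> 0" by (simp add: l1_nonneg)
    have Abound: "l1 (?A \<mu> b) \<le> B1 * R * B1" if "\<bar>b\<bar> \<le> ut" for \<mu> b
    proof -
      have "l1 (?A \<mu> b) \<le> l1 (M \<mu> b) * l1 \<rho> * l1 (M \<mu> b)" by (rule l1_sand)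
      also have "\<dots> \<le> B1 * R * B1"
        by (intro mult_mono B1 that lr) (auto simp: l1_nonneg B1nn R0)
      finally show ?thesis .
    qed
    have Pb0: "B1 * R * B1 \<ge> 0" using B1nn lr0 lr by (simp add: R_def d_def)
    have pbound: "\<bar>prob_out M \<rho> b \<mu>\<bar> \<le> Pb" if "\<bar>b\<bar> \<le> ut" for \<mu> b
    proof -
      have "\<bar>prob_out M \<rho> b \<mu>\<bar> \<le> l1 (?A \<mu> b)" unfolding prob_out_def by (rule trace_bound)
      also have "\<dots> \<le> B1 * R * B1" by (rule Abound[OF that])
      also have "\<dots> \<le> Ku * (B1 * R * B1)" using Ku1 Pb0 by (simp add: mult_le_cancel_right1)
      finally show ?thesis unfolding Pb_def .
    qed
    have abound: "\<bar>a_coef U M \<rho> b \<mu> n\<bar> \<le> Pb" if "\<bar>b\<bar> \<le> ut" for \<mu> b n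
    proof -
      have "\<bar>a_coef U M \<rho> b \<mu> n\<bar> \<le> l1 U * l1 (?A \<mu> b) * l1 U" unfolding a_coef_def by (rule bdiag_bound)
      also have "\<dots> = (l1 U * l1 U) * l1 (?A \<mu> b)" by (simp add: mult_ac)
      also have "\<dots> \<le> Ku * (B1 * R * B1)" by (intro mult_mono lU Abound that lU0) (use Ku1 in \<open>auto simp: l1_nonneg\<close>)
      finally show ?thesis unfolding Pb_def .
    qed
    have Adiff: "l1 (?A \<mu> \<beta> - ?A \<mu> 0) \<le> K1 * \<bar>\<beta>\<bar>" for \<mu>
    proof -
      have "l1 (?A \<mu> \<beta> - ?A \<mu> 0) \<le> l1 (M \<mu> \<beta> - M \<mu> 0) * l1 \<rho> * l1 (M \<mu> \<beta>) + l1 (M \<mu> 0) * l1 \<rho> * l1 (M \<mu> \<beta> - M \<mu> 0)"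
        by (rule l1_sand_diff)
      also have "\<dots> \<le> (L * \<bar>\<beta>\<bar>) * R * B1 + B0 * R * (L * \<bar>\<beta>\<bar>)"
        by (intro add_mono mult_mono Lip bu lr B1 B0 l1_nonneg mult_nonneg_nonneg)
           (use L0 B1nn lr0 lr in \<open>auto intro: order_trans[OF l1_nonneg B0]\<close>)
      also have "\<dots> = K1 * \<bar>\<beta>\<bar>" unfolding K1_def by (simp add: algebra_simps)
      finally show ?thesis .
    qed
    have K10: "K1 \<ge> 0" unfolding K1_def using L0 B1nn B01 lr0 lr
      by (auto intro!: add_nonneg_nonneg mult_nonneg_nonneg intro: order_trans[OF l1_nonneg B0] order_trans[OF lr0 lr])
    have pdiff: "\<bar>prob_out M \<rho> \<beta> \<mu> - prob_out M \<rho> 0 \<mu>\<bar> \<le> Db * \<bar>\<beta>\<bar>" for \<mu>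
    proof -
      have "\<bar>prob_out M \<rho> \<beta> \<mu> - prob_out M \<rho> 0 \<mu>\<bar> = \<bar>Re (ctrace (?A \<mu> \<beta> - ?A \<mu> 0))\<bar>"
        unfolding prob_out_def ctrace_diff by simp
      also have "\<dots> \<le> K1 * \<bar>\<beta>\<bar>" by (rule order_trans[OF trace_bound Adiff])
      also have "\<dots> \<le> Ku * (K1 * \<bar>\<beta>\<bar>)" using mult_right_mono[OF Ku1, of "K1 * \<bar>\<beta>\<bar>"] K10 by simp
      finally show ?thesis unfolding Db_def by (simp add: mult_ac)
    qed
    have adiff: "\<bar>a_coef U M \<rho> \<beta> \<mu> n - a_coef U M \<rho> 0 \<mu> n\<bar> \<le> Db * \<bar>\<beta>\<bar>" for \<mu> n
    proof -
      have "\<bar>a_coef U M \<rho> \<beta> \<mu> n - a_coef U M \<rho> 0 \<mu> n\<bar> = \<bar>Re (bdiag U (?A \<mu> \<beta> - ?A \<mu> 0) n)\<bar>"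
        unfolding a_coef_def bdiag_diff[symmetric] by simp
      also have "\<dots> \<le> l1 U * l1 (?A \<mu> \<beta> - ?A \<mu> 0) * l1 U" by (rule bdiag_bound)
      also have "\<dots> = (l1 U * l1 U) * l1 (?A \<mu> \<beta> - ?A \<mu> 0)" by (simp add: mult_ac)
      also have "\<dots> \<le> Ku * (K1 * \<bar>\<beta>\<bar>)" by (intro mult_mono lU Adiff lU0) (use Ku1 in \<open>auto simp: l1_nonneg\<close>)
      finally show ?thesis unfolding Db_def by (simp add: mult_ac)
    qed
    have a_nn: "a_coef U M \<rho> b \<mu> n \<ge> 0" for b \<mu> n
      unfolding a_coef_def by (rule bdiag_nonneg[OF psd])
    have psum: "prob_out M \<rho> b \<mu> = (\<Sum>n\<in>UNIV. a_coef U M \<rho> b \<mu> n)" for b \<mu>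
      unfolding prob_out_def a_coef_def using sum_bdiag[OF U] by simp
    have Fz: "a_coef U M \<rho> \<beta> \<mu> n * prob_out M \<rho> \<beta> \<nu> = a_coef U M \<rho> \<beta> \<nu> n * prob_out M \<rho> \<beta> \<mu>" for \<mu> \<nu> n
      by (rule q1_zero[of "a_coef U M \<rho> \<beta>" "prob_out M \<rho> \<beta>", OF a_nn psum]) (use Q in \<open>simp only: Q1_def\<close>)
    have a0: "a_coef U M \<rho> 0 \<mu> n = W \<mu> n * q n" for \<mu> n
      unfolding a_coef_def A1 W_def q_def by (rule a_zero[OF U])
    have p0: "prob_out M \<rho> 0 \<mu> = (\<Sum>k\<in>UNIV. W \<mu> k * q k)" for \<mu>
      using psum[of 0 \<mu>] a0 by simp
    define E where "E = 4 * Pb * Db * \<bar>\<beta>\<bar>"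
    have Fb: "\<bar>W \<mu> n * q n * (\<Sum>k\<in>UNIV. W \<nu> k * q k) - W \<nu> n * q n * (\<Sum>k\<in>UNIV. W \<mu> k * q k)\<bar> \<le> E" for \<mu> \<nu> n
    proof -
      let ?x = "a_coef U M \<rho> \<beta> \<mu> n"
      let ?y = "prob_out M \<rho> \<beta> \<nu>"
      let ?xz = "a_coef U M \<rho> 0 \<mu> n"
      let ?yz = "prob_out M \<rho> 0 \<nu>"
      let ?u = "a_coef U M \<rho> \<beta> \<nu> n"
      let ?v = "prob_out M \<rho> \<beta> \<mu>"
      let ?uz = "a_coef U M \<rho> 0 \<nu> n"
      let ?vz = "prob_out M \<rho> 0 \<mu>"
      have "?xz * ?yz - ?uz * ?vz = (?u * ?v - ?uz * ?vz) - (?x * ?y - ?xz * ?yz)"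
        using Fz[of \<mu> n \<nu>] by linarith
      then have "\<bar>?xz * ?yz - ?uz * ?vz\<bar> \<le> \<bar>?u * ?v - ?uz * ?vz\<bar> + \<bar>?x * ?y - ?xz * ?yz\<bar>"
        by (simp add: abs_triangle_ineq4)
      also have "\<dots> \<le> 2 * Pb * (Db * \<bar>\<beta>\<bar>) + 2 * Pb * (Db * \<bar>\<beta>\<bar>)"
        by (intro add_mono prod_diff_bound adiff pdiff pbound abound bu) (use ut in auto)
      finally show ?thesis unfolding E_def a0 p0 by (simp add: algebra_simps)
    qed
    have q_nn: "q n \<ge> 0" for n
      unfolding q_def bdiag_def using psd_conj_diag[OF psd, of U n] by simp
    have qsum: "(\<Sum>n\<in>UNIV. q n) = 1" unfolding q_def using sum_bdiag[OF U, of \<rho>] tr by simp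
    obtain N where N: "q N \<ge> 1 - d * d * (2 * m * E) / \<gamma>"
      using comb[OF q_nn qsum wsum gpos gam Fb] unfolding d_def m_def by blast
    have "C * \<bar>\<beta>\<bar> \<ge> d * d * (2 * m * E) / \<gamma>"
    proof -
      have "d * d * (2 * m * E) / \<gamma> = (d * d * (2 * m * (4 * Pb * Db)) / \<gamma>) * \<bar>\<beta>\<bar>"
        unfolding E_def by (simp add: field_simps)
      also have "\<dots> \<le> C * \<bar>\<beta>\<bar>" unfolding C_def by (simp add: algebra_simps)
      finally show ?thesis .
    qed
    then show "\<exists>n. Re (bdiag U \<rho> n) \<ge> 1 - C * \<bar>\<beta>\<bar>" using N unfolding q_def by (intro exI[of _ N]) linarith
  qed
qed


end
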